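(* If $G$ is a connected block graph, then $\mu_t(G)=|\mathcal{S}(G)|=n(G)-|\mathcal{P}(G)|$.
   Context: All graphs are finite, simple and undirected; $n(G)$ denotes the order of $G$ and $N_G[v]$ the closed neighborhood of $v$. A block graph is a graph in which every block (maximal 2-connected subgraph or bridge) is a complete graph. Let $G$ be a connected graph and $X\subseteq V(G)$. Two vertices $x,y\in V(G)$ are $X$-visible if there exists a shortest $x,y$-path in $G$ none of whose internal vertices belongs to $X$. The set $X$ is a total mutual-visibility set of $G$ if every two vertices of $G$ are $X$-visible (the empty set is allowed). The total mutual-visibility number $\mu_t(G)$ is the maximum cardinality of a total mutual-visibility set of $G$. A vertex is simplicial if its neighbors induce a complete graph; $\mathcal{S}(G)$ is the set of simplicial vertices. $\mathcal{P}(G)$ is the set of vertices $v$ for which there exist two distinct vertices $u,w\in V(G)$ with $N_G[u]\cap N_G[w]=\{v\}$. *)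

theory Defs
  imports Main
begin

definition simple_graph :: "'a set \<Rightarrow> ('a \<Rightarrow> 'a \<Rightarrow> bool) \<Rightarrow> bool" where
  "simple_graph V E \<longleftrightarrow> finite V \<and> (\<forall>x y. E x y \<longrightarrow> x \<in> V \<and> y \<in> V)
     \<and> (\<forall>x y. E x y \<longrightarrow> E y x) \<and> (\<forall>x. \<not> E x x)"

text \<open>A walk is a nonempty vertex list with consecutive vertices adjacent; its length is
  the number of edges, i.e. length - 1.\<close>

definition walk :: "('a \<Rightarrow> 'a \<Rightarrow> bool) \<Rightarrow> 'a list \<Rightarrow> bool" where
  "walk E xs \<longleftrightarrow> xs \<noteq> [] \<and> (\<forall>i. Suc i < length xs \<longrightarrow> E (xs ! i) (xs ! Suc i))"

definition walk_from_to :: "('a \<Rightarrow> 'a \<Rightarrow> bool) \<Rightarrow> 'a \<Rightarrow> 'a \<Rightarrow> 'a list \<Rightarrow> bool" where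
  "walk_from_to E x y xs \<longleftrightarrow> walk E xs \<and> hd xs = x \<and> last xs = y"

text \<open>Connectedness of the subgraph induced by S (the empty set counts as connected).\<close>

definition connected_on :: "('a \<Rightarrow> 'a \<Rightarrow> bool) \<Rightarrow> 'a set \<Rightarrow> bool" where
  "connected_on E S \<longleftrightarrow> (\<forall>x\<in>S. \<forall>y\<in>S. \<exists>xs. walk_from_to E x y xs \<and> set xs \<subseteq> S)"

definition connected_graph :: "'a set \<Rightarrow> ('a \<Rightarrow> 'a \<Rightarrow> bool) \<Rightarrow> bool" where
  "connected_graph V E \<longleftrightarrow> V \<noteq> {} \<and> connected_on E V"

definition shortest_path :: "('a \<Rightarrow> 'a \<Rightarrow> bool) \<Rightarrow> 'a \<Rightarrow> 'a \<Rightarrow> 'a list \<Rightarrow> bool" where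
  "shortest_path E x y xs \<longleftrightarrow> walk_from_to E x y xs
     \<and> (\<forall>ys. walk_from_to E x y ys \<longrightarrow> length xs \<le> length ys)"

definition internal_vertices :: "'a list \<Rightarrow> 'a set" where
  "internal_vertices xs = set (butlast (tl xs))"

definition X_visible :: "('a \<Rightarrow> 'a \<Rightarrow> bool) \<Rightarrow> 'a set \<Rightarrow> 'a \<Rightarrow> 'a \<Rightarrow> bool" where
  "X_visible E X x y \<longleftrightarrow> (\<exists>xs. shortest_path E x y xs \<and> internal_vertices xs \<inter> X = {})"

definition total_mutual_visibility_set :: "'a set \<Rightarrow> ('a \<Rightarrow> 'a \<Rightarrow> bool) \<Rightarrow> 'a set \<Rightarrow> bool" where
  "total_mutual_visibility_set V E X \<longleftrightarrow> X \<subseteq> V \<and> (\<forall>x\<in>V. \<forall>y\<in>V. X_visible E X x y)"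

definition mu_t :: "'a set \<Rightarrow> ('a \<Rightarrow> 'a \<Rightarrow> bool) \<Rightarrow> nat" where
  "mu_t V E = Max (card ` {X. total_mutual_visibility_set V E X})"

definition closed_nbhd :: "('a \<Rightarrow> 'a \<Rightarrow> bool) \<Rightarrow> 'a \<Rightarrow> 'a set" where
  "closed_nbhd E v = insert v {u. E v u}"

definition simplicial_vertices :: "'a set \<Rightarrow> ('a \<Rightarrow> 'a \<Rightarrow> bool) \<Rightarrow> 'a set" where
  "simplicial_vertices V E = {v\<in>V. \<forall>a b. E v a \<and> E v b \<and> a \<noteq> b \<longrightarrow> E a b}"

definition P_set :: "'a set \<Rightarrow> ('a \<Rightarrow> 'a \<Rightarrow> bool) \<Rightarrow> 'a set" where
  "P_set V E = {v\<in>V. \<exists>u\<in>V. \<exists>w\<in>V. u \<noteq> w \<and> closed_nbhd E u \<inter> closed_nbhd E w = {v}}"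

text \<open>For a connected graph with at
  least two vertices these are exactly the maximal 2-connected subgraphs and the bridges
  (blocks are induced subgraphs); for K1 the only block is the vertex itself.\<close>

definition nonseparable :: "'a set \<Rightarrow> ('a \<Rightarrow> 'a \<Rightarrow> bool) \<Rightarrow> 'a set \<Rightarrow> bool" where
  "nonseparable V E B \<longleftrightarrow> B \<noteq> {} \<and> B \<subseteq> V \<and> connected_on E B
     \<and> (\<forall>v\<in>B. connected_on E (B - {v}))"

definition is_block :: "'a set \<Rightarrow> ('a \<Rightarrow> 'a \<Rightarrow> bool) \<Rightarrow> 'a set \<Rightarrow> bool" where
  "is_block V E B \<longleftrightarrow> nonseparable V E B \<and> (\<forall>B'. nonseparable V E B' \<and> B \<subseteq> B' \<longrightarrow> B' = B)"

definition is_clique :: "('a \<Rightarrow> 'a \<Rightarrow> bool) \<Rightarrow> 'a set \<Rightarrow> bool" where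
  "is_clique E B \<longleftrightarrow> (\<forall>x\<in>B. \<forall>y\<in>B. x \<noteq> y \<longrightarrow> E x y)"

definition block_graph :: "'a set \<Rightarrow> ('a \<Rightarrow> 'a \<Rightarrow> bool) \<Rightarrow> bool" where
  "block_graph V E \<longleftrightarrow> (\<forall>B. is_block V E B \<longrightarrow> is_clique E B)"

end

theory Submission
  imports Defs
begin
lemma walk_succ: "walk E xs \<longleftrightarrow> xs \<noteq> [] \<and> successively E xs"
  unfolding walk_def successively_conv_nth by blast

lemma simplicial_not_internal0:
  assumes sg: "simple_graph V E" and sp: "shortest_path E x y xs"
    and s: "s \<in> simplicial_vertices V E"
  and xs: "xs = p @ s # q" and p: "p \<noteq> []" and q: "q \<noteq> []"
  shows False
proof -
  have w: "walk_from_to E x y xs" and mn: "\<forall>ys. walk_from_to E x y ys \<longrightarrow> length xs \<le> length ys"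
    using sp by (simp_all add: shortest_path_def)
  have sx: "successively E xs" using w by (simp add: walk_from_to_def walk_succ)
  have sp': "successively E p" and sq: "successively E q" and ea: "E (last p) s" and eb: "E s (hd q)"
    using sx p q unfolding xs by (simp_all add: successively_append_iff successively_Cons)
  have hx: "hd p = x" and ly: "last q = y" using w p q by (simp_all add: xs walk_from_to_def)
  have sym: "\<And>a b. E a b \<Longrightarrow> E b a" using sg by (simp add: simple_graph_def)
  have "\<exists>ys. walk_from_to E x y ys \<and> length ys < length xs"
  proof (cases "last p = hd q")
    case True
    obtain b q' where qq: "q = b # q'" using q by (cases q) auto
    show ?thesis
    proof (cases "q' = []")
      case True
      have "walk_from_to E x y p"
        using sp' p hx ly \<open>last p = hd q\<close> True qq
        by (simp add: walk_from_to_def walk_succ)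
      thus ?thesis unfolding xs by (intro exI conjI) auto
    next
      case False
      have "successively E q'" "E b (hd q')" using sq qq False by (auto simp: successively_Cons)
      then have "walk_from_to E x y (p @ q')"
        using sp' p hx ly \<open>last p = hd q\<close> False qq
        by (simp add: walk_from_to_def walk_succ successively_append_iff)
      thus ?thesis unfolding xs qq by (intro exI conjI) auto
    qed
  next
    case False
    have "E s (last p)" using sym[OF ea] .
    hence "E (last p) (hd q)" using s eb False unfolding simplicial_vertices_def by blast
    hence "walk_from_to E x y (p @ q)"
      using sp' sq p q hx ly by (simp add: walk_from_to_def walk_succ successively_append_iff)
    thus ?thesis unfolding xs by (intro exI conjI) auto
  qed
  then obtain ys where "walk_from_to E x y ys" "length ys < length xs" by blast
  with mn show False by fastforce
qed

lemma shortest_exists: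
  assumes "walk_from_to E x y zs"
  shows "\<exists>xs. shortest_path E x y xs"
proof -
  obtain xs where "walk_from_to E x y xs" "\<forall>ys. walk_from_to E x y ys \<longrightarrow> length xs \<le> length ys"
    using ex_has_least_nat[of "walk_from_to E x y" zs length] assms by blast
  thus ?thesis unfolding shortest_path_def by blast
qed

lemma internal_split:
  assumes "s \<in> internal_vertices xs"
  shows "\<exists>p q. xs = p @ s # q \<and> p \<noteq> [] \<and> q \<noteq> []"
proof -
  from assms have "s \<in> set (butlast (tl xs))" by (simp add: internal_vertices_def)
  then obtain l1 l2 where l: "butlast (tl xs) = l1 @ s # l2" by (meson split_list)
  then have "tl xs \<noteq> []" by auto
  then have "tl xs = butlast (tl xs) @ [last (tl xs)]" by simp
  moreover have "xs = hd xs # tl xs" using \<open>tl xs \<noteq> []\<close> by (cases xs) auto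
  ultimately have "xs = (hd xs # l1) @ s # (l2 @ [last (tl xs)])" using l by simp
  thus ?thesis by blast
qed

lemma simplicial_not_internal:
  assumes sg: "simple_graph V E" and sp: "shortest_path E x y xs"
    and s: "s \<in> simplicial_vertices V E"
  shows "s \<notin> internal_vertices xs"
proof
  assume "s \<in> internal_vertices xs"
  from internal_split[OF this] obtain p q where h: "xs = p @ s # q" "p \<noteq> []" "q \<noteq> []"
    by blast
  show False by (rule simplicial_not_internal0[OF sg sp s h])
qed

lemma conn_center:
  assumes sym: "\<And>a b. E a b \<Longrightarrow> E b a" and c: "c \<in> S"
    and h: "\<forall>y\<in>S. y = c \<or> E c y \<or> (\<exists>z\<in>S. E c z \<and> E z y)"
  shows "connected_on E S"
proof -
  have pth: "\<exists>xs. walk_from_to E c y xs \<and> set xs \<subseteq> S" if "y \<in> S" for y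
  proof -
    have "y = c \<or> E c y \<or> (\<exists>z\<in>S. E c z \<and> E z y)" using h that by blast
    then show ?thesis
    proof (elim disjE bexE conjE)
      assume "y = c" thus ?thesis using c by (intro exI[of _ "[c]"]) (simp add: walk_from_to_def walk_succ)
    next
      assume "E c y" thus ?thesis using c that by (intro exI[of _ "[c,y]"]) (simp add: walk_from_to_def walk_succ)
    next
      fix z assume "z \<in> S" "E c z" "E z y"
      thus ?thesis using c that by (intro exI[of _ "[c,z,y]"]) (simp add: walk_from_to_def walk_succ)
    qed
  qed
  show ?thesis unfolding connected_on_def
  proof (intro ballI)
    fix x y assume x: "x \<in> S" and y: "y \<in> S"
    obtain a where a: "walk_from_to E c x a" "set a \<subseteq> S" using pth x by blast
    obtain b where b: "walk_from_to E c y b" "set b \<subseteq> S" using pth y by blast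
    have "successively E a" using a(1) by (simp add: walk_from_to_def walk_succ)
    hence "successively (\<lambda>x y. E y x) a" by (rule successively_mono) (rule sym)
    hence sa: "successively E (rev a)" by simp
    have sb: "successively E b" "b \<noteq> []" "hd b = c" "last b = y" "hd a = c" "last a = x" "a \<noteq> []"
      using a(1) b(1) by (simp_all add: walk_from_to_def walk_succ)
    obtain b0 b' where bb: "b = b0 # b'" using sb(2) by (cases b) auto
    show "\<exists>xs. walk_from_to E x y xs \<and> set xs \<subseteq> S"
    proof (cases "b' = []")
      case True
      hence "y = c" using sb bb by simp
      thus ?thesis using sa sb a by (intro exI[of _ "rev a"]) (simp add: walk_from_to_def walk_succ hd_rev last_rev)
    next
      case False
      have "successively E b'" "E c (hd b')" using sb bb False
        by (simp_all add: successively_Cons)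
      moreover have "set b' \<subseteq> S" using b(2) bb by simp
      ultimately show ?thesis using sa sb a False bb
        by (intro exI[of _ "rev a @ b'"])
           (simp add: walk_from_to_def walk_succ successively_append_iff hd_rev last_rev)
    qed
  qed
qed

lemma S_tmv:
  assumes sg: "simple_graph V E" and cg: "connected_graph V E"
  shows "total_mutual_visibility_set V E (simplicial_vertices V E)"
  unfolding total_mutual_visibility_set_def
proof (intro conjI ballI)
  show "simplicial_vertices V E \<subseteq> V" by (auto simp: simplicial_vertices_def)
  fix x y assume "x \<in> V" "y \<in> V"
  then obtain zs where "walk_from_to E x y zs" using cg unfolding connected_graph_def connected_on_def by blast
  then obtain xs where sp: "shortest_path E x y xs" using shortest_exists by metis
  have "internal_vertices xs \<inter> simplicial_vertices V E = {}"
    using simplicial_not_internal[OF sg sp] by blast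
  thus "X_visible E (simplicial_vertices V E) x y" unfolding X_visible_def using sp by blast
qed

lemma P_facts:
  assumes sg: "simple_graph V E" and v: "v \<in> P_set V E"
  shows "\<exists>u w. u \<in> V \<and> w \<in> V \<and> u \<noteq> w \<and> E u v \<and> E v w \<and> \<not> E u w \<and> u \<noteq> v \<and> w \<noteq> v
      \<and> (\<forall>m. E u m \<and> E m w \<longrightarrow> m = v)"
proof -
  have sym: "\<And>a b. E a b \<Longrightarrow> E b a" using sg by (simp add: simple_graph_def)
  obtain u w where uw: "u \<in> V" "w \<in> V" "u \<noteq> w" and I: "closed_nbhd E u \<inter> closed_nbhd E w = {v}"
    using v unfolding P_set_def by blast
  have I': "\<And>m. (m = u \<or> E u m) \<and> (m = w \<or> E w m) \<longleftrightarrow> m = v"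
    using I unfolding closed_nbhd_def by blast
  have nuw: "\<not> E u w"
  proof
    assume "E u w"
    hence "w = v" "u = v" using I'[of w] I'[of u] sym[of u w] by blast+
    thus False using uw by simp
  qed
  have uv: "u \<noteq> v"
  proof
    assume "u = v"
    hence "u = w \<or> E w u" using I'[of v] by blast
    thus False using uw nuw sym[of w u] by blast
  qed
  have wv: "w \<noteq> v"
  proof
    assume "w = v"
    hence "w = u \<or> E u w" using I'[of v] by blast
    thus False using uw nuw by blast
  qed
  have "E u v" using I'[of v] uv by blast
  moreover have "E v w" using I'[of v] wv sym[of w v] by blast
  moreover have "\<forall>m. E u m \<and> E m w \<longrightarrow> m = v" using I' sym by blast
  ultimately show ?thesis using uw nuw uv wv by blast
qed

lemma length3: "length xs = 3 \<Longrightarrow> \<exists>a m c. xs = [a,m,c]"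
  by (cases xs; cases "tl xs"; cases "tl (tl xs)") auto

lemma P_not_tmv:
  assumes sg: "simple_graph V E" and X: "total_mutual_visibility_set V E X" and v: "v \<in> P_set V E"
  shows "v \<notin> X"
proof
  assume vX: "v \<in> X"
  have sym: "\<And>a b. E a b \<Longrightarrow> E b a" using sg by (simp add: simple_graph_def)
  obtain u w where f: "u \<in> V" "w \<in> V" "u \<noteq> w" "E u v" "E v w" "\<not> E u w" "u \<noteq> v" "w \<noteq> v"
    and M: "\<forall>m. E u m \<and> E m w \<longrightarrow> m = v"
    using P_facts[OF sg v] by blast
  obtain xs where sp: "shortest_path E u w xs" and int: "internal_vertices xs \<inter> X = {}"
    using X f unfolding total_mutual_visibility_set_def X_visible_def by blast
  have "walk_from_to E u w [u,v,w]" using f by (simp add: walk_from_to_def walk_succ)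
  hence le: "length xs \<le> 3" using sp unfolding shortest_path_def by fastforce
  have wx: "xs \<noteq> []" "successively E xs" "hd xs = u" "last xs = w"
    using sp by (simp_all add: shortest_path_def walk_from_to_def walk_succ)
  have "length xs \<noteq> 1"
  proof
    assume "length xs = 1"
    then obtain a where "xs = [a]" by (cases xs) auto
    thus False using wx f by simp
  qed
  moreover have "length xs \<noteq> 2"
  proof
    assume "length xs = 2"
    then obtain a b where "xs = [a,b]" by (cases xs; cases "tl xs") auto
    thus False using wx f by simp
  qed
  moreover have "length xs \<noteq> 0" using wx by simp
  ultimately have "length xs = 3" using le by linarith
  then obtain a m c where xs: "xs = [a,m,c]" using length3 by blast
  hence "E u m" "E m w" using wx by simp_all
  hence "m = v" using M by blast
  hence "v \<in> internal_vertices xs" using xs by (simp add: internal_vertices_def)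
  thus False using int vX by blast
qed

lemma S_not_P:
  assumes sg: "simple_graph V E" and s: "v \<in> simplicial_vertices V E"
  shows "v \<notin> P_set V E"
proof
  assume v: "v \<in> P_set V E"
  have sym: "\<And>a b. E a b \<Longrightarrow> E b a" using sg by (simp add: simple_graph_def)
  obtain u w where f: "u \<noteq> w" "E u v" "E v w" "\<not> E u w"
    using P_facts[OF sg v] by blast
  have "\<forall>a b. E v a \<and> E v b \<and> a \<noteq> b \<longrightarrow> E a b" using s unfolding simplicial_vertices_def by blast
  thus False using f sym[OF f(2)] by blast
qed

lemma block_exists:
  assumes fin: "finite V" and B: "nonseparable V E B"
  shows "\<exists>B'. is_block V E B' \<and> B \<subseteq> B'"
proof -
  let ?A = "{B'. nonseparable V E B' \<and> B \<subseteq> B'}"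
  have "?A \<subseteq> Pow V" by (auto simp: nonseparable_def)
  hence f1: "finite ?A" using fin by (meson finite_Pow_iff finite_subset)
  have f2: "?A \<noteq> {}" using B by blast
  from finite_has_maximal[OF f1 f2] obtain m where m: "m \<in> ?A" "\<forall>b\<in>?A. m \<le> b \<longrightarrow> m = b"
    by blast
  have "is_block V E m" unfolding is_block_def
  proof (intro conjI allI impI)
    show "nonseparable V E m" using m by blast
    fix B' assume "nonseparable V E B' \<and> m \<subseteq> B'"
    hence "B' \<in> ?A" using m by blast
    thus "B' = m" using m \<open>nonseparable V E B' \<and> m \<subseteq> B'\<close> by blast
  qed
  thus ?thesis using m by blast
qed

lemma nonS_P:
  assumes sg: "simple_graph V E" and bg: "block_graph V E" and vV: "v \<in> V"
    and ns: "v \<notin> simplicial_vertices V E"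
  shows "v \<in> P_set V E"
proof -
  have sym: "\<And>a b. E a b \<Longrightarrow> E b a" using sg by (simp add: simple_graph_def)
  have irr: "\<And>a. \<not> E a a" and inV: "\<And>a b. E a b \<Longrightarrow> a \<in> V \<and> b \<in> V"
    using sg by (simp_all add: simple_graph_def)
  obtain a b where ab: "E v a" "E v b" "a \<noteq> b" "\<not> E a b"
    using ns vV unfolding simplicial_vertices_def by blast
  have av: "E a v" and bv: "E b v" using sym ab by blast+
  have aV: "a \<in> V" and bV: "b \<in> V" using inV ab by blast+
  have core: "z = v" if az: "E a z" and bz: "E b z" for z
  proof (rule ccontr)
    assume zv: "z \<noteq> v"
    have za: "E z a" and zb: "E z b" using sym az bz by blast+
    have d: "a \<noteq> v" "b \<noteq> v" "z \<noteq> a" "z \<noteq> b"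
      using irr ab az bz by metis+
    have zV: "z \<in> V" using inV az by blast
    have c1: "connected_on E {a,v,b,z}"
      by (rule conn_center[OF sym, where c=a]) (use ab av bv az bz za zb in auto)
    have c2: "connected_on E {v,b,z}"
      by (rule conn_center[OF sym, where c=b]) (use ab av bv az bz za zb in auto)
    have c3: "connected_on E {a,b,z}"
      by (rule conn_center[OF sym, where c=z]) (use ab av bv az bz za zb in auto)
    have c4: "connected_on E {a,v,z}"
      by (rule conn_center[OF sym, where c=a]) (use ab av bv az bz za zb in auto)
    have c5: "connected_on E {a,v,b}"
      by (rule conn_center[OF sym, where c=v]) (use ab av bv az bz za zb in auto)
    have e1: "{a,v,b,z} - {a} = {v,b,z}" using d ab by blast
    have e2: "{a,v,b,z} - {v} = {a,b,z}" using d ab zv by blast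
    have e3: "{a,v,b,z} - {b} = {a,v,z}" using d ab by blast
    have e4: "{a,v,b,z} - {z} = {a,v,b}" using d ab zv by blast
    have "nonseparable V E {a,v,b,z}" unfolding nonseparable_def
    proof (intro conjI ballI)
      show "{a,v,b,z} \<noteq> {}" by simp
      show "{a,v,b,z} \<subseteq> V" using aV bV vV zV by blast
      show "connected_on E {a,v,b,z}" by (rule c1)
      fix y assume "y \<in> {a,v,b,z}"
      hence "y = a \<or> y = v \<or> y = b \<or> y = z" by blast
      thus "connected_on E ({a,v,b,z} - {y})"
        using c2 c3 c4 c5 e1 e2 e3 e4 by metis
    qed
    then obtain B' where "is_block V E B'" "{a,v,b,z} \<subseteq> B'"
      using block_exists sg by (metis simple_graph_def)
    hence "is_clique E B'" "a \<in> B'" "b \<in> B'" using bg unfolding block_graph_def by blast+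
    hence "E a b" using ab unfolding is_clique_def by blast
    thus False using ab by blast
  qed
  have "closed_nbhd E a \<inter> closed_nbhd E b = {v}"
  proof (rule set_eqI)
    fix z
    show "z \<in> closed_nbhd E a \<inter> closed_nbhd E b \<longleftrightarrow> z \<in> {v}"
    proof
      assume "z \<in> closed_nbhd E a \<inter> closed_nbhd E b"
      hence "(z = a \<or> E a z) \<and> (z = b \<or> E b z)" by (simp add: closed_nbhd_def)
      thus "z \<in> {v}" using core ab sym[of b a] by blast
    next
      assume "z \<in> {v}"
      thus "z \<in> closed_nbhd E a \<inter> closed_nbhd E b" using av bv by (simp add: closed_nbhd_def)
    qed
  qed
  thus ?thesis unfolding P_set_def using vV aV bV ab(3) by blast
qed

theorem corollary3p4:
  fixes V :: "'a set" and E :: "'a \<Rightarrow> 'a \<Rightarrow> bool"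
  assumes "simple_graph V E" and "connected_graph V E" and "block_graph V E"
  shows "mu_t V E = card (simplicial_vertices V E)
       \<and> card (simplicial_vertices V E) = card V - card (P_set V E)"
proof -
  note sg = assms(1)
  have fin: "finite V" using sg by (simp add: simple_graph_def)
  let ?S = "simplicial_vertices V E" and ?P = "P_set V E"
  have SV: "?S \<subseteq> V" by (auto simp: simplicial_vertices_def)
  have PV: "?P \<subseteq> V" by (auto simp: P_set_def)
  have Seq: "?S = V - ?P"
  proof
    show "?S \<subseteq> V - ?P" using SV S_not_P[OF sg] by blast
    show "V - ?P \<subseteq> ?S" using nonS_P[OF sg assms(3)] by blast
  qed
  have c2: "card ?S = card V - card ?P"
    unfolding Seq using PV fin by (simp add: card_Diff_subset finite_subset)
  let ?T = "{X. total_mutual_visibility_set V E X}"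
  have "?T \<subseteq> Pow V" by (auto simp: total_mutual_visibility_set_def)
  hence fT: "finite ?T" using fin by (meson finite_Pow_iff finite_subset)
  have ST: "?S \<in> ?T" using S_tmv[OF sg assms(2)] by blast
  have le: "card X \<le> card ?S" if "X \<in> ?T" for X
  proof -
    have "X \<subseteq> V" using that by (simp add: total_mutual_visibility_set_def)
    moreover have "X \<inter> ?P = {}" using P_not_tmv[OF sg] that by blast
    ultimately have "X \<subseteq> ?S" unfolding Seq by blast
    thus ?thesis using SV fin by (meson card_mono finite_subset)
  qed
  have "mu_t V E = card ?S" unfolding mu_t_def
    by (rule Max_eqI) (use fT ST le in auto)
  thus ?thesis using c2 by blast
qed

end
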